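(* Let $p$ be an odd prime and let $a$ be an integer with $a\not\equiv \pm 1 \pmod p$. Put $\epsilon=\left(\frac{a^2-1}{p}\right)$ and $\delta=\left(\frac{2(a+1)}{p}\right)$ (Legendre symbols; both lie in $\{\pm1\}$ under this hypothesis), and let $\omega_a=a+\sqrt{a^2-1}$. Then, in the ring $\mathbb{Z}[\sqrt{a^2-1}]$ (i.e. $\mathbb{Z}[X]/(X^2-(a^2-1))$) reduced modulo $p$, $$\omega_a^{\frac{p-\epsilon}{2}}\equiv \delta,\qquad \omega_a^{\frac{p+\epsilon}{2}}\equiv \delta\,\omega_a^{\epsilon}\pmod p,$$ equivalently $$T_{(p-\epsilon)/2}(a)\equiv\delta,\quad U_{(p-\epsilon)/2-1}(a)\equiv 0,\quad T_{(p+\epsilon)/2}(a)\equiv\delta a,\quad U_{(p+\epsilon)/2-1}(a)\equiv\delta\epsilon \pmod p.$$ Moreover $T_{(p-\epsilon)/2}(a)\equiv\delta \pmod{p^2}$, and $T_{(p-\epsilon)/2}(a)\equiv\delta \pmod p$ by itself implies $U_{(p-\epsilon)/2-1}(a)\equiv 0\pmod p$.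
   Context: The Chebyshev polynomials $T_n(x)$ (first kind) and $U_{n}(x)$ (second kind) are the integer polynomials determined by $(x+\sqrt{x^2-1})^n=T_n(x)+U_{n-1}(x)\sqrt{x^2-1}$ for $n\ge 0$ (so $T_0=1$, $U_{-1}=0$, $T_1=x$, $U_0=1$, and $T_n(\cos\theta)=\cos n\theta$). For an element $u+v\sqrt{a^2-1}$ with $u,v\in\mathbb{Z}$, congruence modulo $p$ means $u$ and $v$ are each congruent modulo $p$; $\omega_a^{-1}=a-\sqrt{a^2-1}$. *)

theory Defs
  imports "HOL-Number_Theory.Number_Theory"
begin

text \<open>Coefficients of powers of omega_a = a + sqrt(a^2-1) in Z[sqrt(a^2-1)]:
  omega_pow a n = (u, v) means omega_a^n = u + v sqrt(a^2-1).
  By definition of the Chebyshev polynomials, omega_pow a n = (T_n(a), U_{n-1}(a)).\<close>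
fun omega_pow :: "int \<Rightarrow> nat \<Rightarrow> int \<times> int" where
  "omega_pow a 0 = (1, 0)"
| "omega_pow a (Suc n) =
     (let (u, v) = omega_pow a n in (a * u + (a\<^sup>2 - 1) * v, u + a * v))"

definition chebT :: "nat \<Rightarrow> int \<Rightarrow> int" where
  "chebT n a = fst (omega_pow a n)"

definition chebU :: "nat \<Rightarrow> int \<Rightarrow> int" where
  "chebU n a = snd (omega_pow a (Suc n))"

definition cong_pair :: "int \<times> int \<Rightarrow> int \<times> int \<Rightarrow> int \<Rightarrow> bool" where
  "cong_pair x y m \<longleftrightarrow> [fst x = fst y] (mod m) \<and> [snd x = snd y] (mod m)"

end

theory Submission
  imports Defs
begin

datatype qz = QZ (re: "int \<Rightarrow> int") (im: "int \<Rightarrow> int")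

lemma qz_eqI: "(\<And>d. re x d = re y d) \<Longrightarrow> (\<And>d. im x d = im y d) \<Longrightarrow> x = y"
  by (cases x; cases y) (auto simp: fun_eq_iff)

instantiation qz :: comm_ring_1
begin
definition "0 = QZ (\<lambda>_. 0) (\<lambda>_. 0)"
definition "1 = QZ (\<lambda>_. 1) (\<lambda>_. 0)"
definition "x + y = QZ (\<lambda>d. re x d + re y d) (\<lambda>d. im x d + im y d)"
definition "x - y = QZ (\<lambda>d. re x d - re y d) (\<lambda>d. im x d - im y d)"
definition "- x = QZ (\<lambda>d. - re x d) (\<lambda>d. - im x d)"
definition "x * y = QZ (\<lambda>d. re x d * re y d + d * im x d * im y d)
                        (\<lambda>d. re x d * im y d + im x d * re y d)"
instance
  by standard (auto intro!: qz_eqI simp: zero_qz_def one_qz_def plus_qz_def minus_qz_def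
      uminus_qz_def times_qz_def algebra_simps fun_eq_iff)
end

lemma qz_simps [simp]:
  "re 0 d = 0" "im 0 d = 0" "re 1 d = 1" "im 1 d = 0"
  "re (x + y) d = re x d + re y d" "im (x + y) d = im x d + im y d"
  "re (x - y) d = re x d - re y d" "im (x - y) d = im x d - im y d"
  "re (- x) d = - re x d" "im (- x) d = - im x d"
  "re (x * y) d = re x d * re y d + d * im x d * im y d"
  "im (x * y) d = re x d * im y d + im x d * re y d"
  by (simp_all add: zero_qz_def one_qz_def plus_qz_def minus_qz_def
      uminus_qz_def times_qz_def)

lemma qz_of_nat [simp]: "re (of_nat n) d = int n" "im (of_nat n) d = 0"
  by (induction n) auto

lemma qz_of_int [simp]: "re (of_int k) d = k" "im (of_int k) d = 0"
  by (cases k rule: int_cases; simp)+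

lemma qz_numeral [simp]: "re (numeral n) d = numeral n" "im (numeral n) d = 0"
  using qz_of_nat[of "numeral n" d] by simp_all

lemma qz_real_pow: "QZ f (\<lambda>_. 0) ^ n = QZ (\<lambda>d. f d ^ n) (\<lambda>_. 0)"
  by (induction n) (auto intro!: qz_eqI)

definition qc :: "int \<Rightarrow> int \<Rightarrow> qz \<Rightarrow> qz \<Rightarrow> bool" where
  "qc D m x y \<longleftrightarrow> [re x D = re y D] (mod m) \<and> [im x D = im y D] (mod m)"

lemma qc_refl [simp]: "qc D m x x" by (simp add: qc_def)
lemma qc_sym: "qc D m x y \<Longrightarrow> qc D m y x" by (auto simp: qc_def cong_sym)
lemma qc_trans: "qc D m x y \<Longrightarrow> qc D m y z \<Longrightarrow> qc D m x z"
  by (auto simp: qc_def intro: cong_trans)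
lemma qc_add: "qc D m x y \<Longrightarrow> qc D m x' y' \<Longrightarrow> qc D m (x + x') (y + y')"
  by (auto simp: qc_def intro: cong_add)
lemma qc_mult: "qc D m x y \<Longrightarrow> qc D m x' y' \<Longrightarrow> qc D m (x * x') (y * y')"
  by (auto simp: qc_def intro!: cong_add cong_mult cong_scalar_left)
lemma qc_pow: "qc D m x y \<Longrightarrow> qc D m (x ^ n) (y ^ n)"
  by (induction n) (auto intro: qc_mult)
lemma qc_0: "qc D 0 x y \<longleftrightarrow> re x D = re y D \<and> im x D = im y D"
  by (simp add: qc_def)
lemma qc_0_imp: "qc D 0 x y \<Longrightarrow> qc D m x y"
  by (simp add: qc_def)
lemma qc_cancel: "coprime k m \<Longrightarrow> qc D m (of_int k * x) (of_int k * y) \<Longrightarrow> qc D m x y"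
  by (simp add: qc_def cong_mult_lcancel)

lemma frob_generic:
  fixes x y :: "'a::comm_ring_1"
  assumes "prime P"
  shows "\<exists>z. (x + y) ^ P = x ^ P + y ^ P + of_nat P * z"
proof -
  have P0: "P \<noteq> 0" using assms by auto
  let ?z = "\<Sum>k\<le>P. of_nat ((P choose k) div P) * x ^ k * y ^ (P - k)"
  have t: "of_nat (P choose k) * x ^ k * y ^ (P - k) =
      (if k = P then x ^ P else 0) + (if k = 0 then y ^ P else 0)
       + of_nat P * (of_nat ((P choose k) div P) * x ^ k * y ^ (P - k))" if "k \<le> P" for k
  proof (cases "k = 0 \<or> k = P")
    case True
    have "Suc 0 div P = 0" using prime_gt_1_nat[OF assms] by simp
    then show ?thesis using P0 True by auto
  next
    case False
    then have "P dvd (P choose k)" using that assms by (intro dvd_choose_prime) auto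
    then have "of_nat (P choose k) = (of_nat P * of_nat ((P choose k) div P) :: 'a)"
      by (metis dvd_mult_div_cancel of_nat_mult)
    then show ?thesis using False by (simp add: algebra_simps)
  qed
  have "(x + y) ^ P = (\<Sum>k\<le>P. of_nat (P choose k) * x ^ k * y ^ (P - k))"
    by (rule binomial_ring)
  also have "\<dots> = x ^ P + y ^ P + of_nat P * ?z"
    using t by (simp add: sum.distrib sum_distrib_left)
  finally show ?thesis by blast
qed


declare qc_trans [trans]

lemma qc_of_int: "[x = y] (mod m) \<Longrightarrow> qc D m (of_int x) (of_int y)"
  by (simp add: qc_def)

lemma qc_eq: "x = y \<Longrightarrow> qc D m x y" by simp

lemma omega_pow_qz:
  "omega_pow a n = (re (QZ (\<lambda>_. a) (\<lambda>_. 1) ^ n) (a\<^sup>2 - 1), im (QZ (\<lambda>_. a) (\<lambda>_. 1) ^ n) (a\<^sup>2 - 1))"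
  by (induction n) (auto simp: algebra_simps)

lemma core:
  fixes P :: nat and a c D \<epsilon> \<delta> :: int
  assumes P: "prime P" and h: "P = 2 * h + 1"
    and D: "D = a\<^sup>2 - 1" and c: "c = a + 1"
    and cop: "coprime (2 * c) (int P)"
    and fermat: "[c ^ P = c] (mod int P)"
    and eps: "[D ^ h = \<epsilon>] (mod int P)" and "\<epsilon> \<in> {1, -1}"
    and del: "[(2 * c) ^ h = \<delta>] (mod int P)" and "\<delta> \<in> {1, -1}"
  defines "\<omega> \<equiv> QZ (\<lambda>_. a) (\<lambda>_. 1)" and "\<omega>b \<equiv> QZ (\<lambda>_. a) (\<lambda>_. -1)"
  shows "qc D (int P) (\<omega> ^ (if \<epsilon> = 1 then h else h + 1)) (of_int \<delta>)
       \<and> qc D (int P) (\<omega> ^ (if \<epsilon> = 1 then h + 1 else h)) (of_int \<delta> * (if \<epsilon> = 1 then \<omega> else \<omega>b))"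
proof -
  define \<beta> where "\<beta> = QZ (\<lambda>_. c) (\<lambda>_. 1)"
  define \<beta>b where "\<beta>b = QZ (\<lambda>_. c) (\<lambda>_. -1)"
  define s where "s = QZ (\<lambda>_. 0) (\<lambda>_. 1)"
  define C where "C = QZ (\<lambda>_. c) (\<lambda>_. 0)"
  define L :: qz where "L = of_int (2 * c)"
  have \<beta>Cs: "\<beta> = C + s" unfolding \<beta>_def C_def s_def by (auto intro!: qz_eqI)
  obtain z where z: "\<beta> ^ P = C ^ P + s ^ P + of_nat P * z"
    using frob_generic[OF P] \<beta>Cs by blast
  have CP: "C ^ P = QZ (\<lambda>_. c ^ P) (\<lambda>_. 0)" unfolding C_def by (rule qz_real_pow)
  have s2: "s ^ 2 = QZ (\<lambda>d. d) (\<lambda>_. 0)" unfolding s_def by (auto intro!: qz_eqI simp: power2_eq_square)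
  have sP: "s ^ P = QZ (\<lambda>d. d ^ h) (\<lambda>_. 0) * s"
    by (simp add: h power_add power_mult s2 qz_real_pow)
  have frob: "qc D (int P) (\<beta> ^ P) (QZ (\<lambda>_. c) (\<lambda>_. \<epsilon>))"
  proof -
    have "re (\<beta> ^ P) D = c ^ P + int P * re z D" "im (\<beta> ^ P) D = D ^ h + int P * im z D"
      unfolding z CP sP by (simp_all add: s_def)
    moreover have "[c ^ P + int P * re z D = c] (mod int P)"
      using fermat by (metis cong_mult_self_left cong_add cong_add_rcancel_0 add_0_right cong_trans)
    moreover have "[D ^ h + int P * im z D = \<epsilon>] (mod int P)"
      using eps by (metis cong_mult_self_left cong_add cong_add_rcancel_0 add_0_right cong_trans)
    ultimately show ?thesis by (simp add: qc_def)
  qed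
  have bb: "qc D 0 (\<beta> * \<beta>b) L"
    unfolding \<beta>_def \<beta>b_def L_def qc_0 by (simp add: D c power2_eq_square algebra_simps)
  have b2: "qc D 0 (\<beta> ^ 2) (L * \<omega>)"
    unfolding \<beta>_def \<omega>_def L_def qc_0 by (simp add: D c power2_eq_square algebra_simps)
  have ww: "qc D 0 (\<omega> * \<omega>b) 1"
    unfolding \<omega>_def \<omega>b_def qc_0 by (simp add: D power2_eq_square algebra_simps)
  have b2m: "qc D (int P) (\<beta> ^ (2 * m)) (L ^ m * \<omega> ^ m)" for m
  proof -
    have "\<beta> ^ (2 * m) = (\<beta> ^ 2) ^ m" by (simp add: power_mult)
    also have "qc D (int P) \<dots> ((L * \<omega>) ^ m)" by (rule qc_pow, rule qc_0_imp, rule b2)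
    also have "(L * \<omega>) ^ m = L ^ m * \<omega> ^ m" by (simp add: power_mult_distrib)
    finally show ?thesis .
  qed
  have Lh: "qc D (int P) (L ^ h) (of_int \<delta>)"
    unfolding L_def of_int_power[symmetric] by (rule qc_of_int[OF del])
  have dd: "(of_int \<delta> :: qz) * of_int \<delta> = 1"
    using \<open>\<delta> \<in> {1, -1}\<close> by auto
  have cancel: "qc D (int P) x 1" if "qc D (int P) (L * x) L" for x
    using qc_cancel[OF cop, of D x 1] that unfolding L_def by simp
  have inv\<delta>: "qc D (int P) x (of_int \<delta>)" if "qc D (int P) (of_int \<delta> * x) 1" for x
  proof -
    have "x = of_int \<delta> * (of_int \<delta> * x)" using dd by (simp add: mult.assoc[symmetric])
    also have "qc D (int P) \<dots> (of_int \<delta> * 1)" by (rule qc_mult[OF qc_refl that])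
    finally show ?thesis by simp
  qed
  show ?thesis
  proof (cases "\<epsilon> = 1")
    case True
    have F: "qc D (int P) (\<beta> ^ P) \<beta>" using frob True unfolding \<beta>_def by simp
    have "L * \<beta> ^ (2 * h) = \<beta> ^ (2 * h) * L" by (simp add: mult.commute)
    also have "qc D (int P) \<dots> (\<beta> ^ (2 * h) * (\<beta> * \<beta>b))"
      by (rule qc_mult[OF qc_refl qc_sym[OF qc_0_imp[OF bb]]])
    also have "\<beta> ^ (2 * h) * (\<beta> * \<beta>b) = \<beta> ^ P * \<beta>b"
      by (simp add: h power_add mult.assoc)
    also have "qc D (int P) \<dots> (\<beta> * \<beta>b)" by (rule qc_mult[OF F qc_refl])
    also have "qc D (int P) \<dots> L" by (rule qc_0_imp[OF bb])
    finally have "qc D (int P) (\<beta> ^ (2 * h)) 1" by (rule cancel)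
    have "qc D (int P) (of_int \<delta> * \<omega> ^ h) (L ^ h * \<omega> ^ h)"
      by (rule qc_mult[OF qc_sym[OF Lh] qc_refl])
    also have "qc D (int P) \<dots> (\<beta> ^ (2 * h))" by (rule qc_sym[OF b2m])
    also note \<open>qc D (int P) (\<beta> ^ (2 * h)) 1\<close>
    finally have main: "qc D (int P) (\<omega> ^ h) (of_int \<delta>)" by (rule inv\<delta>)
    have "\<omega> ^ (h + 1) = \<omega> ^ h * \<omega>" by simp
    also have "qc D (int P) \<dots> (of_int \<delta> * \<omega>)" by (rule qc_mult[OF main qc_refl])
    finally show ?thesis using main True by simp
  next
    case False
    then have e: "\<epsilon> = -1" using \<open>\<epsilon> \<in> {1, -1}\<close> by auto
    have F: "qc D (int P) (\<beta> ^ P) \<beta>b" using frob e unfolding \<beta>b_def by simp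
    have "L * (L ^ h * \<omega> ^ (h + 1)) = L ^ (h + 1) * \<omega> ^ (h + 1)" by (simp add: mult.assoc)
    also have "qc D (int P) \<dots> (\<beta> ^ (2 * (h + 1)))" by (rule qc_sym[OF b2m])
    also have "\<beta> ^ (2 * (h + 1)) = \<beta> ^ P * \<beta>"
      by (simp add: h power_add mult.assoc)
    also have "qc D (int P) \<dots> (\<beta>b * \<beta>)" by (rule qc_mult[OF F qc_refl])
    also have "\<beta>b * \<beta> = \<beta> * \<beta>b" by (simp add: mult.commute)
    also have "qc D (int P) \<dots> L" by (rule qc_0_imp[OF bb])
    finally have H: "qc D (int P) (L ^ h * \<omega> ^ (h + 1)) 1" by (rule cancel)
    have "qc D (int P) (of_int \<delta> * \<omega> ^ (h + 1)) (L ^ h * \<omega> ^ (h + 1))"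
      by (rule qc_mult[OF qc_sym[OF Lh] qc_refl])
    also note H
    finally have main: "qc D (int P) (\<omega> ^ (h + 1)) (of_int \<delta>)" by (rule inv\<delta>)
    have "\<omega> ^ h = \<omega> ^ h * 1" by simp
    also have "qc D (int P) \<dots> (\<omega> ^ h * (\<omega> * \<omega>b))"
      by (rule qc_mult[OF qc_refl qc_sym[OF qc_0_imp[OF ww]]])
    also have "\<omega> ^ h * (\<omega> * \<omega>b) = \<omega> ^ (h + 1) * \<omega>b" by (simp add: mult.assoc)
    also have "qc D (int P) \<dots> (of_int \<delta> * \<omega>b)" by (rule qc_mult[OF main qc_refl])
    finally show ?thesis using main False by simp
  qed
qed


lemma omega_norm: "fst (omega_pow a n) ^ 2 - (a\<^sup>2 - 1) * snd (omega_pow a n) ^ 2 = 1"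
proof (induction n)
  case (Suc n)
  obtain u v where uv: "omega_pow a n = (u, v)" by (cases "omega_pow a n")
  with Suc have "u ^ 2 - (a\<^sup>2 - 1) * v ^ 2 = 1" by simp
  then show ?case using uv by (simp add: power2_eq_square algebra_simps)
qed simp

lemma sq_lift:
  fixes T U D \<delta> p :: int
  assumes "prime p" "odd p" "\<delta> \<in> {1, -1}" "T ^ 2 - D * U ^ 2 = 1"
    "[T = \<delta>] (mod p)" "[U = 0] (mod p)"
  shows "[T = \<delta>] (mod p\<^sup>2)"
proof -
  have "p dvd U" using assms(6) by (simp add: cong_0_iff)
  then have "p\<^sup>2 dvd U\<^sup>2" by simp
  then have "p\<^sup>2 dvd (T - \<delta>) * (T + \<delta>)"
    using assms(3,4) by (auto simp: power2_eq_square algebra_simps)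
  moreover have "\<not> p dvd (T + \<delta>)"
  proof
    assume "p dvd T + \<delta>"
    moreover have "p dvd T - \<delta>" using assms(5) by (simp add: cong_iff_dvd_diff)
    ultimately have "p dvd (T + \<delta>) - (T - \<delta>)" by (rule dvd_diff)
    then have "p dvd 2 * \<delta>" by simp
    then have "p dvd 2" using assms(3) by auto
    then have "p \<le> 2" using assms(1) by (auto dest: zdvd_imp_le)
    moreover have "p \<ge> 2" using assms(1) prime_ge_2_int by blast
    ultimately show False using assms(2) by simp
  qed
  then have "coprime (p\<^sup>2) (T + \<delta>)"
    using assms(1) by (simp add: prime_imp_coprime)
  ultimately have "p\<^sup>2 dvd T - \<delta>"
    using coprime_dvd_mult_left_iff by blast
  then show ?thesis by (simp add: cong_iff_dvd_diff)
qed

theorem theorem2p1: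
  fixes p a :: int
  assumes "prime p" and "odd p"
    and "\<not> [a = 1] (mod p)" and "\<not> [a = -1] (mod p)"
  defines "\<epsilon> \<equiv> Legendre (a\<^sup>2 - 1) p"
    and "\<delta> \<equiv> Legendre (2 * (a + 1)) p"
  shows "\<epsilon> \<in> {1, -1} \<and> \<delta> \<in> {1, -1}
    \<and> cong_pair (omega_pow a (nat ((p - \<epsilon>) div 2))) (\<delta>, 0) p
    \<and> cong_pair (omega_pow a (nat ((p + \<epsilon>) div 2)))
           (if \<epsilon> = 1 then (\<delta> * a, \<delta>) else (\<delta> * a, - \<delta>)) p
    \<and> [chebT (nat ((p - \<epsilon>) div 2)) a = \<delta>] (mod p)
    \<and> [chebU (nat ((p - \<epsilon>) div 2) - 1) a = 0] (mod p)
    \<and> [chebT (nat ((p + \<epsilon>) div 2)) a = \<delta> * a] (mod p)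
    \<and> [chebU (nat ((p + \<epsilon>) div 2) - 1) a = \<delta> * \<epsilon>] (mod p)
    \<and> [chebT (nat ((p - \<epsilon>) div 2)) a = \<delta>] (mod p\<^sup>2)
    \<and> ([chebT (nat ((p - \<epsilon>) div 2)) a = \<delta>] (mod p) \<longrightarrow>
         [chebU (nat ((p - \<epsilon>) div 2) - 1) a = 0] (mod p))"
proof -
  define P where "P = nat p"
  have pP: "p = int P" using assms(1) P_def prime_ge_0_int by auto
  have Pprime: "prime P" using assms(1) pP by simp
  have p2: "p \<ge> 2" using assms(1) prime_ge_2_int by blast
  define h where "h = (P - 1) div 2"
  have Ph: "P = 2 * h + 1" using assms(2) pP h_def by (simp add: odd_two_times_div_two_succ even_of_nat_iff)
  have h1: "h \<ge> 1" using p2 pP Ph by linarith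
  have P2: "2 < P" using p2 pP Ph h1 by linarith
  define D where "D = a\<^sup>2 - 1"
  define c where "c = a + 1"
  have nd1: "\<not> p dvd (a - 1)" using assms(3) by (simp add: cong_iff_dvd_diff)
  have nd2: "\<not> p dvd c" using assms(4) unfolding c_def by (simp add: cong_iff_dvd_diff)
  have nd3: "\<not> p dvd 2"
  proof
    assume "p dvd 2" then have "p \<le> 2" by (auto dest: zdvd_imp_le)
    with p2 assms(2) show False by simp
  qed
  have D_eq: "D = (a - 1) * c" unfolding D_def c_def by (simp add: power2_eq_square algebra_simps)
  have ndD: "\<not> p dvd D" using nd1 nd2 D_eq assms(1) by (simp add: prime_dvd_mult_iff)
  have nd2c: "\<not> p dvd 2 * c" using nd2 nd3 assms(1) by (simp add: prime_dvd_mult_iff)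
  have cop: "coprime (2 * c) (int P)"
    using nd2c assms(1) pP by (metis prime_imp_coprime coprime_commute)
  have e_def': "\<epsilon> = Legendre D p" unfolding \<epsilon>_def D_def ..
  have d_def': "\<delta> = Legendre (2 * c) p" unfolding \<delta>_def c_def ..
  have eps1: "\<epsilon> \<in> {1, -1}" using ndD unfolding e_def' Legendre_def by (auto simp: cong_0_iff)
  have del1: "\<delta> \<in> {1, -1}" using nd2c unfolding d_def' Legendre_def by (auto simp: cong_0_iff)
  have hP: "(P - 1) div 2 = h" using h_def by simp
  have eps: "[D ^ h = \<epsilon>] (mod int P)"
    using euler_criterion[OF Pprime P2, of D] e_def' pP hP by (simp add: cong_sym)
  have del: "[(2 * c) ^ h = \<delta>] (mod int P)"
    using euler_criterion[OF Pprime P2, of "2 * c"] d_def' pP hP by (simp add: cong_sym)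
  have ferm: "[c ^ P = c] (mod int P)"
  proof -
    have L1: "Legendre c p \<in> {1, -1}" using nd2 unfolding Legendre_def by (auto simp: cong_0_iff)
    have "[c ^ h = Legendre c p] (mod int P)"
      using euler_criterion[OF Pprime P2, of c] pP hP by (simp add: cong_sym)
    then have "[c * (c ^ h) ^ 2 = c * (Legendre c p) ^ 2] (mod int P)"
      by (intro cong_mult cong_pow cong_refl)
    moreover have "c * (c ^ h) ^ 2 = c ^ P" by (simp add: Ph power_mult[symmetric] mult.commute)
    moreover have "c * (Legendre c p) ^ 2 = c" using L1 by auto
    ultimately show ?thesis by simp
  qed
  define \<omega> where "\<omega> = QZ (\<lambda>_. a) (\<lambda>_. 1)"
  define \<omega>b where "\<omega>b = QZ (\<lambda>_. a) (\<lambda>_. -1)"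
  have C: "qc D (int P) (\<omega> ^ (if \<epsilon> = 1 then h else h + 1)) (of_int \<delta>)
       \<and> qc D (int P) (\<omega> ^ (if \<epsilon> = 1 then h + 1 else h)) (of_int \<delta> * (if \<epsilon> = 1 then \<omega> else \<omega>b))"
    unfolding \<omega>_def \<omega>b_def
    by (rule core[OF Pprime Ph D_def c_def cop ferm eps eps1 del del1])
  define n0 where "n0 = (if \<epsilon> = 1 then h else h + 1)"
  define n1 where "n1 = (if \<epsilon> = 1 then h + 1 else h)"
  have n0: "nat ((p - \<epsilon>) div 2) = n0" using eps1 pP Ph unfolding n0_def by auto
  have n1: "nat ((p + \<epsilon>) div 2) = n1" using eps1 pP Ph unfolding n1_def by auto
  have n0p: "n0 \<ge> 1" "n1 \<ge> 1" using h1 unfolding n0_def n1_def by auto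
  have ow: "omega_pow a n = (re (\<omega> ^ n) D, im (\<omega> ^ n) D)" for n
    unfolding \<omega>_def D_def by (rule omega_pow_qz)
  have A: "cong_pair (omega_pow a n0) (\<delta>, 0) p"
    using C pP unfolding n0_def[symmetric] ow cong_pair_def qc_def by simp
  have B: "cong_pair (omega_pow a n1) (if \<epsilon> = 1 then (\<delta> * a, \<delta>) else (\<delta> * a, - \<delta>)) p"
    using C pP unfolding n1_def[symmetric] ow cong_pair_def qc_def \<omega>_def \<omega>b_def
    by (cases "\<epsilon> = 1") (auto simp: mult.commute)
  have U: "chebU (n - 1) a = snd (omega_pow a n)" if "n \<ge> 1" for n
    using that unfolding chebU_def by (cases n) auto
  have T0: "[chebT n0 a = \<delta>] (mod p)" "[chebU (n0 - 1) a = 0] (mod p)"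
    using A U[OF n0p(1)] unfolding chebT_def cong_pair_def by auto
  have T1: "[chebT n1 a = \<delta> * a] (mod p)" "[chebU (n1 - 1) a = \<delta> * \<epsilon>] (mod p)"
    using B U[OF n0p(2)] eps1 unfolding chebT_def cong_pair_def by (auto split: if_splits)
  have T2: "[chebT n0 a = \<delta>] (mod p\<^sup>2)"
    using sq_lift[OF assms(1,2) del1 omega_norm T0[unfolded chebT_def U[OF n0p(1)]]]
    unfolding chebT_def by simp
  show ?thesis
    unfolding n0 n1 using eps1 del1 A B T0 T1 T2 by simp
qed

end
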